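(* Let $A(z)=\sum_{k=0}^{\infty}a_kz^k$ with $a_0\neq 0$ and $H(z)=\sum_{k=1}^{\infty}h_kz^k$ with $h_1\neq 0$ be analytic in a disk $|z|<R$ with $R>1$, with real coefficients. Let the Sheffer polynomials $p_k$ be defined by $A(t)e^{xH(t)}=\sum_{k=0}^{\infty}p_k(x)t^k$ for $|t|<R$, and assume $p_k(x)\ge 0$ for all $x\ge 0$ and all $k$, $A(1)\neq 0$ and $H'(1)=1$. Let $(b_n)$ be a positive increasing sequence with $b_n\to\infty$ and $b_n/n\to 0$, and define $$T_n^*(f;x)=\frac{e^{-\frac{n}{b_n}xH(1)}}{A(1)}\sum_{k=0}^{\infty}p_k\Big(\frac{n}{b_n}x\Big)f\Big(\frac{k}{n}b_n\Big).$$ Let $\rho(x)=1+x^2$. Then for every $f\in C_\rho^k(\mathbb{R}_0^+)$, $$\lim_{n\to\infty}\|T_n^*(f;\cdot)-f\|_\rho=0.$$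
   Context: $\mathbb{R}_0^+=[0,\infty)$. For a function $g$ on $\mathbb{R}_0^+$, $\|g\|_\rho=\sup_{x\ge 0}\frac{|g(x)|}{\rho(x)}$. $B_\rho(\mathbb{R}_0^+)$ is the set of functions $f$ on $\mathbb{R}_0^+$ with $|f(x)|\le M_f\rho(x)$ for all $x\ge0$ and some constant $M_f>0$; $C_\rho(\mathbb{R}_0^+)$ is the set of continuous functions in $B_\rho(\mathbb{R}_0^+)$; and $C_\rho^k(\mathbb{R}_0^+)$ is the set of $f\in C_\rho(\mathbb{R}_0^+)$ for which $\lim_{x\to\infty}\frac{f(x)}{\rho(x)}$ exists and is finite. *)

theory Defs
  imports "HOL-Analysis.Analysis"
begin

definition rho :: "real \<Rightarrow> real" where
  "rho x = 1 + x\<^sup>2"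

text \<open>Weighted sup norm over [0,\<infinity>), valued in the extended reals
  (so that it may be \<infinity>).\<close>
definition rho_norm :: "(real \<Rightarrow> real) \<Rightarrow> ereal" where
  "rho_norm g = (SUP x\<in>{0..}. ereal (\<bar>g x\<bar> / rho x))"

definition C_rho_k :: "(real \<Rightarrow> real) set" where
  "C_rho_k = {f. continuous_on {0..} f \<and>
                 (\<exists>M>0. \<forall>x\<ge>0. \<bar>f x\<bar> \<le> M * rho x) \<and>
                 (\<exists>L. ((\<lambda>x. f x / rho x) \<longlongrightarrow> L) at_top)}"

definition pser :: "(nat \<Rightarrow> real) \<Rightarrow> real \<Rightarrow> real" where
  "pser c t = (\<Sum>k. c k * t ^ k)"

definition Tstar :: "(nat \<Rightarrow> real) \<Rightarrow> (nat \<Rightarrow> real) \<Rightarrow> (nat \<Rightarrow> real \<Rightarrow> real)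
    \<Rightarrow> (nat \<Rightarrow> real) \<Rightarrow> nat \<Rightarrow> (real \<Rightarrow> real) \<Rightarrow> real \<Rightarrow> real" where
  "Tstar a h p b n f x =
     exp (- (real n / b n) * x * pser h 1) / pser a 1 *
     (\<Sum>k. p k (real n / b n * x) * f (real k / real n * b n))"

end

theory Submission
  imports Defs
begin


lemma ps_deriv:
  fixes c :: "nat \<Rightarrow> real"
  assumes sm: "\<And>t. \<bar>t\<bar> < R \<Longrightarrow> summable (\<lambda>k. c k * t ^ k)" and t: "\<bar>t\<bar> < R"
  shows "(pser c has_field_derivative pser (diffs c) t) (at t)"
    and "\<And>t. \<bar>t\<bar> < R \<Longrightarrow> summable (\<lambda>k. diffs c k * t ^ k)"
proof -
  show "(pser c has_field_derivative pser (diffs c) t) (at t)"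
    unfolding pser_def[abs_def]
    using termdiffs_strong'[of R c t] sm t by auto
  show "\<And>t. \<bar>t\<bar> < R \<Longrightarrow> summable (\<lambda>k. diffs c k * t ^ k)"
    using termdiff_converges[of _ R c] sm by auto
qed

lemma shift1:
  fixes c :: "nat \<Rightarrow> real"
  assumes "(\<lambda>k. diffs c k * 1 ^ k) sums s"
  shows "(\<lambda>k. real k * c k) sums s"
proof -
  have "(\<lambda>k. real (Suc k) * c (Suc k)) sums s" using assms by (simp add: diffs_def)
  then show ?thesis using sums_Suc_iff[of "\<lambda>k. real k * c k" s] by simp
qed

lemma shift2:
  fixes c :: "nat \<Rightarrow> real"
  assumes "(\<lambda>k. diffs (diffs c) k * 1 ^ k) sums s"
  shows "(\<lambda>k. real k * (real k - 1) * c k) sums s"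
proof -
  have "(\<lambda>k. real (Suc (Suc k)) * (real (Suc (Suc k)) - 1) * c (Suc (Suc k))) sums s"
    using assms by (simp add: diffs_def algebra_simps)
  then have "(\<lambda>k. real (Suc k) * (real (Suc k) - 1) * c (Suc k)) sums s"
    using sums_Suc_iff[of "\<lambda>k. real (Suc k) * (real (Suc k) - 1) * c (Suc k)" s] by simp
  then show ?thesis using sums_Suc_iff[of "\<lambda>k. real k * (real k - 1) * c k" s] by simp
qed


lemma moments:
  fixes a h p :: "nat \<Rightarrow> real" and R y :: real
  assumes R: "R > 1"
    and a_conv: "\<And>t. \<bar>t\<bar> < R \<Longrightarrow> summable (\<lambda>k. a k * t ^ k)"
    and h_conv: "\<And>t. \<bar>t\<bar> < R \<Longrightarrow> summable (\<lambda>k. h k * t ^ k)"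
    and gen: "\<And>t. \<bar>t\<bar> < R \<Longrightarrow> (\<lambda>k. p k * t ^ k) sums (pser a t * exp (y * pser h t))"
  shows "p sums (pser a 1 * exp (y * pser h 1))"
    and "(\<lambda>k. real k * p k) sums
          ((pser (diffs a) 1 + y * pser a 1 * pser (diffs h) 1) * exp (y * pser h 1))"
    and "(\<lambda>k. real k * (real k - 1) * p k) sums
          ((pser (diffs (diffs a)) 1 + y * pser (diffs a) 1 * pser (diffs h) 1
            + y * pser a 1 * pser (diffs (diffs h)) 1
            + (pser (diffs a) 1 + y * pser a 1 * pser (diffs h) 1) * (y * pser (diffs h) 1))
           * exp (y * pser h 1))"
proof -
  define S where "S = {-R<..<R}"
  have S: "open S" "1 \<in> S" unfolding S_def using R by auto
  have inS: "\<And>t. t \<in> S \<longleftrightarrow> \<bar>t\<bar> < R" unfolding S_def by auto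
  have p_conv: "\<And>t. \<bar>t\<bar> < R \<Longrightarrow> summable (\<lambda>k. p k * t ^ k)"
    using gen sums_summable by blast
  have peq: "pser p t = pser a t * exp (y * pser h t)" if "\<bar>t\<bar> < R" for t
    using sums_unique[OF gen[OF that]] by (simp add: pser_def)
  have dp_conv: "\<And>t. \<bar>t\<bar> < R \<Longrightarrow> summable (\<lambda>k. diffs p k * t ^ k)"
    using ps_deriv(2)[OF p_conv] by blast
  have da_conv: "\<And>t. \<bar>t\<bar> < R \<Longrightarrow> summable (\<lambda>k. diffs a k * t ^ k)"
    using ps_deriv(2)[OF a_conv] by blast
  have dh_conv: "\<And>t. \<bar>t\<bar> < R \<Longrightarrow> summable (\<lambda>k. diffs h k * t ^ k)"
    using ps_deriv(2)[OF h_conv] by blast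
  define G' where "G' t = (pser (diffs a) t + y * pser a t * pser (diffs h) t) * exp (y * pser h t)" for t
  have dG: "((\<lambda>t. pser a t * exp (y * pser h t)) has_field_derivative G' t) (at t)"
    if t: "\<bar>t\<bar> < R" for t
  proof -
    have 1: "(pser a has_field_derivative pser (diffs a) t) (at t)" using ps_deriv(1)[OF a_conv t] .
    have 2: "(pser h has_field_derivative pser (diffs h) t) (at t)" using ps_deriv(1)[OF h_conv t] .
    have e: "((\<lambda>t. exp (y * pser h t)) has_field_derivative exp (y * pser h t) * (y * pser (diffs h) t)) (at t)"
      by (rule DERIV_fun_exp[OF DERIV_cmult[OF 2]])
    have "((\<lambda>t. pser a t * exp (y * pser h t)) has_field_derivative
       pser (diffs a) t * exp (y * pser h t) + exp (y * pser h t) * (y * pser (diffs h) t) * pser a t) (at t)"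
      by (rule DERIV_mult[OF 1 e])
    moreover have "pser (diffs a) t * exp (y * pser h t) + exp (y * pser h t) * (y * pser (diffs h) t) * pser a t = G' t"
      unfolding G'_def by (simp add: algebra_simps)
    ultimately show ?thesis by metis
  qed
  have dpeq: "pser (diffs p) t = G' t" if t: "\<bar>t\<bar> < R" for t
  proof -
    have "(pser p has_field_derivative G' t) (at t)"
      apply (rule has_field_derivative_transform_within_open[OF dG[OF t], of S])
      using S t inS peq by auto
    then show ?thesis using ps_deriv(1)[OF p_conv t] DERIV_unique by blast
  qed
  have R1: "\<bar>1::real\<bar> < R" using R by simp
  show "p sums (pser a 1 * exp (y * pser h 1))" using gen[OF R1] by simp
  have "(\<lambda>k. diffs p k * 1 ^ k) sums pser (diffs p) 1"
    using dp_conv[OF R1] unfolding pser_def by (rule summable_sums)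
  then show "(\<lambda>k. real k * p k) sums
          ((pser (diffs a) 1 + y * pser a 1 * pser (diffs h) 1) * exp (y * pser h 1))"
    using shift1 dpeq[OF R1] unfolding G'_def by auto
  have d2: "(G' has_field_derivative
          ((pser (diffs (diffs a)) 1 + y * pser (diffs a) 1 * pser (diffs h) 1
            + y * pser a 1 * pser (diffs (diffs h)) 1
            + (pser (diffs a) 1 + y * pser a 1 * pser (diffs h) 1) * (y * pser (diffs h) 1))
           * exp (y * pser h 1))) (at 1)"
  proof -
    have 1: "(pser a has_field_derivative pser (diffs a) 1) (at 1)" using ps_deriv(1)[OF a_conv R1] .
    have 2: "(pser h has_field_derivative pser (diffs h) 1) (at 1)" using ps_deriv(1)[OF h_conv R1] .
    have 3: "(pser (diffs a) has_field_derivative pser (diffs (diffs a)) 1) (at 1)" using ps_deriv(1)[OF da_conv R1] .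
    have 4: "(pser (diffs h) has_field_derivative pser (diffs (diffs h)) 1) (at 1)" using ps_deriv(1)[OF dh_conv R1] .
    have e: "((\<lambda>t. exp (y * pser h t)) has_field_derivative exp (y * pser h 1) * (y * pser (diffs h) 1)) (at 1)"
      by (rule DERIV_fun_exp[OF DERIV_cmult[OF 2]])
    have i: "((\<lambda>t. pser (diffs a) t + y * pser a t * pser (diffs h) t) has_field_derivative
       pser (diffs (diffs a)) 1 + (y * pser (diffs a) 1 * pser (diffs h) 1 + pser (diffs (diffs h)) 1 * (y * pser a 1))) (at 1)"
      by (rule DERIV_add[OF 3 DERIV_mult[OF DERIV_cmult[OF 1] 4]])
    have "((\<lambda>t. (pser (diffs a) t + y * pser a t * pser (diffs h) t) * exp (y * pser h t)) has_field_derivative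
       (pser (diffs (diffs a)) 1 + (y * pser (diffs a) 1 * pser (diffs h) 1 + pser (diffs (diffs h)) 1 * (y * pser a 1)))
        * exp (y * pser h 1) + exp (y * pser h 1) * (y * pser (diffs h) 1) * (pser (diffs a) 1 + y * pser a 1 * pser (diffs h) 1)) (at 1)"
      by (rule DERIV_mult[OF i e])
    moreover have "(\<lambda>t. (pser (diffs a) t + y * pser a t * pser (diffs h) t) * exp (y * pser h t)) = G'"
      unfolding G'_def by simp
    moreover have "(pser (diffs (diffs a)) 1 + (y * pser (diffs a) 1 * pser (diffs h) 1 + pser (diffs (diffs h)) 1 * (y * pser a 1)))
        * exp (y * pser h 1) + exp (y * pser h 1) * (y * pser (diffs h) 1) * (pser (diffs a) 1 + y * pser a 1 * pser (diffs h) 1)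
       = (pser (diffs (diffs a)) 1 + y * pser (diffs a) 1 * pser (diffs h) 1
            + y * pser a 1 * pser (diffs (diffs h)) 1
            + (pser (diffs a) 1 + y * pser a 1 * pser (diffs h) 1) * (y * pser (diffs h) 1))
           * exp (y * pser h 1)" by (simp add: algebra_simps)
    ultimately show ?thesis by metis
  qed
  have "(pser (diffs p) has_field_derivative
          ((pser (diffs (diffs a)) 1 + y * pser (diffs a) 1 * pser (diffs h) 1
            + y * pser a 1 * pser (diffs (diffs h)) 1
            + (pser (diffs a) 1 + y * pser a 1 * pser (diffs h) 1) * (y * pser (diffs h) 1))
           * exp (y * pser h 1))) (at 1)"
    apply (rule has_field_derivative_transform_within_open[OF d2, of S])
    using S inS dpeq by auto
  then have e2: "pser (diffs (diffs p)) 1 = 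
          ((pser (diffs (diffs a)) 1 + y * pser (diffs a) 1 * pser (diffs h) 1
            + y * pser a 1 * pser (diffs (diffs h)) 1
            + (pser (diffs a) 1 + y * pser a 1 * pser (diffs h) 1) * (y * pser (diffs h) 1))
           * exp (y * pser h 1))"
    using ps_deriv(1)[OF dp_conv R1] DERIV_unique by blast
  have "(\<lambda>k. diffs (diffs p) k * 1 ^ k) sums pser (diffs (diffs p)) 1"
    using ps_deriv(2)[OF dp_conv R1 R1] unfolding pser_def by (rule summable_sums)
  then show "(\<lambda>k. real k * (real k - 1) * p k) sums
          ((pser (diffs (diffs a)) 1 + y * pser (diffs a) 1 * pser (diffs h) 1
            + y * pser a 1 * pser (diffs (diffs h)) 1
            + (pser (diffs a) 1 + y * pser a 1 * pser (diffs h) 1) * (y * pser (diffs h) 1))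
           * exp (y * pser h 1))"
    using shift2 e2 by auto
qed



lemma rho_ge1: "rho x \<ge> 1" unfolding rho_def by simp
lemma rho_pos: "rho x > 0" using rho_ge1[of x] by simp
lemma x_le_rho: "x \<le> rho x"
proof (cases "x \<le> 1")
  case True then show ?thesis unfolding rho_def by (simp add: add_increasing2)
next
  case False
  then have "x * 1 \<le> x * x" by (intro mult_left_mono) auto
  then show ?thesis unfolding rho_def by (simp add: power2_eq_square)
qed

lemma abs_aux:
  fixes x d P Q :: real
  assumes x: "x \<ge> 0" and d: "d \<ge> 0"
  shows "\<bar>d * (P * x + d * Q)\<bar> \<le> d * (\<bar>P\<bar> + d * \<bar>Q\<bar>) * rho x"
proof -
  have 1: "\<bar>P * x + d * Q\<bar> \<le> \<bar>P\<bar> * x + d * \<bar>Q\<bar>"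
    using x d abs_triangle_ineq[of "P*x" "d*Q"] by (simp add: abs_mult)
  have 2: "\<bar>P\<bar> * x \<le> \<bar>P\<bar> * rho x" using x_le_rho[of x] by (simp add: mult_left_mono)
  have 3: "d * \<bar>Q\<bar> \<le> d * \<bar>Q\<bar> * rho x" using rho_ge1[of x] d
    using mult_left_mono[of 1 "rho x" "d*\<bar>Q\<bar>"] by simp
  have "\<bar>P * x + d * Q\<bar> \<le> (\<bar>P\<bar> + d * \<bar>Q\<bar>) * rho x" using 1 2 3 by (simp add: algebra_simps)
  then have "d * \<bar>P * x + d * Q\<bar> \<le> d * ((\<bar>P\<bar> + d * \<bar>Q\<bar>) * rho x)" using d by (rule mult_left_mono)
  then show ?thesis using d by (simp add: abs_mult mult.assoc)
qed


lemma split_bound: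
  fixes g :: "real \<Rightarrow> real" and e \<eta> X K s u :: real
  assumes e: "e > 0" and eta: "\<eta> > 0" "\<eta> \<le> 1" and X: "X \<ge> 0" and K: "K \<ge> 0"
    and tail: "\<And>s. s \<ge> X \<Longrightarrow> \<bar>g s\<bar> \<le> e * rho s"
    and uc: "\<And>s u. s \<in> {0..X+1} \<Longrightarrow> u \<in> {0..X+1} \<Longrightarrow> \<bar>s - u\<bar> < \<eta> \<Longrightarrow> \<bar>g s - g u\<bar> < e"
    and bd: "\<And>s. s \<in> {0..X+1} \<Longrightarrow> \<bar>g s\<bar> \<le> K"
    and s: "s \<ge> 0" and u: "u \<ge> 0"
  shows "\<bar>g s - g u\<bar> \<le> e + e * rho s + e * rho u + 2 * K / \<eta>^2 * (s - u)^2"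
proof -
  have rs: "e * rho s \<ge> 0" "e * rho u \<ge> 0" using e rho_pos[of s] rho_pos[of u] by auto
  have q0: "2 * K / \<eta>^2 * (s - u)^2 \<ge> 0" using K by simp
  have far: "2 * K \<le> 2 * K / \<eta>^2 * (s - u)^2" if "\<bar>s - u\<bar> \<ge> \<eta>"
  proof -
    have "\<eta>^2 \<le> \<bar>s - u\<bar>^2" using that eta by (intro power_mono) auto
    then have "\<eta>^2 \<le> (s - u)^2" by simp
    then have "1 \<le> (s - u)^2 / \<eta>^2" using eta by simp
    then have "2 * K * 1 \<le> 2 * K * ((s - u)^2 / \<eta>^2)" using K by (intro mult_left_mono) auto
    then show ?thesis by simp
  qed
  have tri: "\<bar>g s - g u\<bar> \<le> \<bar>g s\<bar> + \<bar>g u\<bar>" by simp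
  show ?thesis
  proof (cases "s \<le> X + 1 \<and> u \<le> X + 1")
    case True
    then have I: "s \<in> {0..X+1}" "u \<in> {0..X+1}" using s u by auto
    show ?thesis
    proof (cases "\<bar>s - u\<bar> < \<eta>")
      case True then show ?thesis using uc[OF I] rs q0 by linarith
    next
      case False
      then have "2 * K \<le> 2 * K / \<eta>^2 * (s - u)^2" using far by simp
      then show ?thesis using bd[OF I(1)] bd[OF I(2)] tri rs e by linarith
    qed
  next
    case False
    show ?thesis
    proof (cases "s \<ge> X \<and> u \<ge> X")
      case True
      then have "\<bar>g s\<bar> \<le> e * rho s" "\<bar>g u\<bar> \<le> e * rho u" using tail by auto
      then show ?thesis using tri q0 e by linarith
    next
      case F2: False
      have "\<bar>s - u\<bar> \<ge> \<eta>" using False F2 eta by auto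
      moreover have "\<bar>g s\<bar> + \<bar>g u\<bar> \<le> K + e * rho s + e * rho u"
      proof (cases "s < X")
        case True
        then have "u > X + 1" using False by auto
        then show ?thesis using bd[of s] tail[of u] True s rs K by auto
      next
        case False
        then have "u < X" using F2 by auto
        then have "s > X + 1" using \<open>\<not> (s \<le> X + 1 \<and> u \<le> X + 1)\<close> by auto
        then show ?thesis using bd[of u] tail[of s] \<open>u < X\<close> u rs K by auto
      qed
      ultimately show ?thesis using far tri K rs e by (smt (verit))
    qed
  qed
qed


lemma pointwise_est:
  fixes f g :: "real \<Rightarrow> real" and W T :: "nat \<Rightarrow> real" and x \<delta> \<alpha> B C L M e K' :: real
  assumes x: "x \<ge> 0" and \<delta>: "\<delta> \<ge> 0" and e: "e > 0" and K': "K' \<ge> 0" and M: "M > 0"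
    and fb: "\<And>s. s \<ge> 0 \<Longrightarrow> \<bar>f s\<bar> \<le> M * rho s"
    and g: "\<And>s. g s = f s - L * rho s"
    and P: "\<And>s u. s \<ge> 0 \<Longrightarrow> u \<ge> 0 \<Longrightarrow> \<bar>g s - g u\<bar> \<le> e + e * rho s + e * rho u + K' * (s - u)^2"
    and Wnn: "\<And>k. W k \<ge> 0" and Tnn: "\<And>k. T k \<ge> 0"
    and m0: "W sums 1"
    and m1: "(\<lambda>k. W k * T k) sums (x + \<delta> * \<alpha>)"
    and m2: "(\<lambda>k. W k * (T k)^2) sums (x^2 + \<delta> * (B * x + \<delta> * C))"
  shows "summable (\<lambda>k. W k * f (T k))"
    and "\<bar>suminf (\<lambda>k. W k * f (T k)) - f x\<bar> \<le>
          (3 * e + (e * (\<delta> * (\<bar>B\<bar> + \<delta> * \<bar>C\<bar>)) + K' * (\<delta> * (\<bar>B\<bar> + 2 * \<bar>\<alpha>\<bar> + \<delta> * \<bar>C\<bar>))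
             + \<bar>L\<bar> * (\<delta> * (\<bar>B\<bar> + \<delta> * \<bar>C\<bar>)))) * rho x"
proof -
  define S2 where "S2 = x^2 + \<delta> * (B * x + \<delta> * C)"
  have mr: "(\<lambda>k. W k * rho (T k)) sums (1 + S2)"
  proof -
    have "(\<lambda>k. W k + W k * (T k)^2) sums (1 + S2)" using sums_add[OF m0 m2] unfolding S2_def .
    then show ?thesis by (simp add: rho_def algebra_simps)
  qed
  show sf: "summable (\<lambda>k. W k * f (T k))"
  proof (rule summable_comparison_test'[where N=0])
    show "summable (\<lambda>k. M * (W k * rho (T k)))" using mr by (intro summable_mult) (rule sums_summable)
    fix k
    have "\<bar>W k * f (T k)\<bar> = W k * \<bar>f (T k)\<bar>" using Wnn[of k] by (simp add: abs_mult)
    also have "\<dots> \<le> W k * (M * rho (T k))" using fb[OF Tnn[of k]] Wnn[of k] by (rule mult_left_mono)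
    finally show "norm (W k * f (T k)) \<le> M * (W k * rho (T k))" by (simp add: mult.left_commute)
  qed
  define F where "F k = W k * (f (T k) - f x)" for k
  have Fs: "F sums (suminf (\<lambda>k. W k * f (T k)) - f x)"
  proof -
    have "(\<lambda>k. W k * f x) sums (1 * f x)" using m0 by (rule sums_mult2)
    from sums_diff[OF summable_sums[OF sf] this] show ?thesis
      unfolding F_def by (simp add: algebra_simps)
  qed
  define Rr where "Rr k = W k * rho (T k) - W k * rho x" for k
  have Rs: "Rr sums (S2 - x^2)"
  proof -
    have "(\<lambda>k. W k * rho x) sums (1 * rho x)" using m0 by (rule sums_mult2)
    from sums_diff[OF mr this] show ?thesis unfolding Rr_def by (simp add: rho_def)
  qed
  define G where "G k = W k * (g (T k) - g x)" for k
  have GFR: "G k = F k - L * Rr k" for k unfolding G_def F_def Rr_def g by (simp add: algebra_simps)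
  have Gs: "G sums (suminf (\<lambda>k. W k * f (T k)) - f x - L * (S2 - x^2))"
    unfolding GFR[abs_def] by (intro sums_diff Fs sums_mult Rs)
  define bnd where "bnd k = (e + e * rho x + e + K' * x^2) * W k + (-2 * K' * x) * (W k * T k)
      + (e + K') * (W k * (T k)^2)" for k
  define V where "V = (e + e * rho x + e + K' * x^2) * 1 + (-2 * K' * x) * (x + \<delta> * \<alpha>) + (e + K') * S2"
  have bs: "bnd sums V" unfolding bnd_def[abs_def] V_def
    by (intro sums_add sums_mult m0 m1) (use m2 S2_def in simp)
  have Gb: "\<bar>G k\<bar> \<le> bnd k" for k
  proof -
    have "\<bar>G k\<bar> = W k * \<bar>g (T k) - g x\<bar>" unfolding G_def using Wnn[of k] by (simp add: abs_mult)
    also have "\<dots> \<le> W k * (e + e * rho (T k) + e * rho x + K' * (T k - x)^2)"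
      using P[OF Tnn[of k] x] Wnn[of k] by (rule mult_left_mono)
    also have "\<dots> = bnd k" unfolding bnd_def rho_def by (simp add: power2_eq_square algebra_simps)
    finally show ?thesis .
  qed
  have sG: "summable G" using Gs by (rule sums_summable)
  have sb: "summable bnd" using bs by (rule sums_summable)
  have "suminf G \<le> suminf bnd" using Gb sG sb by (intro suminf_le) (auto simp: abs_le_iff)
  moreover have "- suminf bnd \<le> suminf G"
  proof -
    have "suminf (\<lambda>k. - bnd k) \<le> suminf G" using Gb sG sb
      by (intro suminf_le) (auto simp: abs_le_iff summable_minus minus_le_iff)
    then show ?thesis using suminf_minus[OF sb] by simp
  qed
  ultimately have absG: "\<bar>suminf G\<bar> \<le> V" using sums_unique[OF bs] by auto
  have eqG: "suminf (\<lambda>k. W k * f (T k)) - f x = suminf G + L * (\<delta> * (B * x + \<delta> * C))"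
    using sums_unique[OF Gs] unfolding S2_def by simp
  have Veq: "V = e + 2 * e * rho x + e * (\<delta> * (B * x + \<delta> * C)) + K' * (\<delta> * ((B - 2 * \<alpha>) * x + \<delta> * C))"
    unfolding V_def S2_def rho_def by (simp add: algebra_simps power2_eq_square)
  define Er where "Er = \<delta> * (\<bar>B\<bar> + \<delta> * \<bar>C\<bar>)"
  have h1: "e \<le> e * rho x" using rho_ge1[of x] e by simp
  have h2: "e * (\<delta> * (B * x + \<delta> * C)) \<le> e * (Er * rho x)"
    using abs_aux[OF x \<delta>, of B C] e unfolding Er_def
    by (intro mult_left_mono) auto
  have h3a: "\<bar>\<delta> * ((B - 2 * \<alpha>) * x + \<delta> * C)\<bar> \<le> \<delta> * (\<bar>B - 2 * \<alpha>\<bar> + \<delta> * \<bar>C\<bar>) * rho x"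
    by (rule abs_aux[OF x \<delta>])
  have h3b: "\<delta> * (\<bar>B - 2 * \<alpha>\<bar> + \<delta> * \<bar>C\<bar>) * rho x \<le> \<delta> * (\<bar>B\<bar> + 2 * \<bar>\<alpha>\<bar> + \<delta> * \<bar>C\<bar>) * rho x"
    using \<delta> rho_pos[of x] by (intro mult_right_mono mult_left_mono) (auto simp: abs_triangle_ineq4[THEN order_trans])
  have h3: "K' * (\<delta> * ((B - 2 * \<alpha>) * x + \<delta> * C)) \<le> K' * (\<delta> * (\<bar>B\<bar> + 2 * \<bar>\<alpha>\<bar> + \<delta> * \<bar>C\<bar>) * rho x)"
    using h3a h3b K' by (intro mult_left_mono) (auto simp: abs_le_iff)
  have h4: "\<bar>L * (\<delta> * (B * x + \<delta> * C))\<bar> \<le> \<bar>L\<bar> * (Er * rho x)"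
    using abs_aux[OF x \<delta>, of B C] unfolding Er_def abs_mult[of L]
    by (intro mult_left_mono) auto
  have "\<bar>suminf (\<lambda>k. W k * f (T k)) - f x\<bar> \<le> \<bar>suminf G\<bar> + \<bar>L * (\<delta> * (B * x + \<delta> * C))\<bar>"
    unfolding eqG by (rule abs_triangle_ineq)
  also have "\<dots> \<le> e * rho x + 2 * e * rho x + e * (Er * rho x)
     + K' * (\<delta> * (\<bar>B\<bar> + 2 * \<bar>\<alpha>\<bar> + \<delta> * \<bar>C\<bar>) * rho x) + \<bar>L\<bar> * (Er * rho x)"
    using absG Veq h1 h2 h3 h4 by linarith
  also have "\<dots> = (3 * e + (e * (\<delta> * (\<bar>B\<bar> + \<delta> * \<bar>C\<bar>)) + K' * (\<delta> * (\<bar>B\<bar> + 2 * \<bar>\<alpha>\<bar> + \<delta> * \<bar>C\<bar>))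
             + \<bar>L\<bar> * (\<delta> * (\<bar>B\<bar> + \<delta> * \<bar>C\<bar>)))) * rho x"
    unfolding Er_def by (simp add: algebra_simps)
  finally show "\<bar>suminf (\<lambda>k. W k * f (T k)) - f x\<bar> \<le>
          (3 * e + (e * (\<delta> * (\<bar>B\<bar> + \<delta> * \<bar>C\<bar>)) + K' * (\<delta> * (\<bar>B\<bar> + 2 * \<bar>\<alpha>\<bar> + \<delta> * \<bar>C\<bar>))
             + \<bar>L\<bar> * (\<delta> * (\<bar>B\<bar> + \<delta> * \<bar>C\<bar>)))) * rho x" .
qed


theorem theorem3p4:
  fixes a h :: "nat \<Rightarrow> real" and R :: real
    and p :: "nat \<Rightarrow> real \<Rightarrow> real" and b :: "nat \<Rightarrow> real"
    and f :: "real \<Rightarrow> real"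
  assumes R: "R > 1"
    and a_conv: "\<And>t. \<bar>t\<bar> < R \<Longrightarrow> summable (\<lambda>k. a k * t ^ k)"
    and h_conv: "\<And>t. \<bar>t\<bar> < R \<Longrightarrow> summable (\<lambda>k. h k * t ^ k)"
    and a0: "a 0 \<noteq> 0"
    and h0: "h 0 = 0"
    and h1: "h 1 \<noteq> 0"
    and gen: "\<And>x t. \<bar>t\<bar> < R \<Longrightarrow>
                 (\<lambda>k. p k x * t ^ k) sums (pser a t * exp (x * pser h t))"
    and p_nonneg: "\<And>k x. x \<ge> 0 \<Longrightarrow> p k x \<ge> 0"
    and A1: "pser a 1 \<noteq> 0"
    and H'1: "deriv (pser h) 1 = 1"
    and b_pos: "\<And>n. b n > 0"
    and b_mono: "mono b"
    and b_inf: "filterlim b at_top sequentially"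
    and b_o: "(\<lambda>n. b n / real n) \<longlonglongrightarrow> 0"
    and f: "f \<in> C_rho_k"
  shows "(\<lambda>n. rho_norm (\<lambda>x. Tstar a h p b n f x - f x)) \<longlonglongrightarrow> 0"
proof -
  obtain M L where fc: "continuous_on {0..} f" and M: "M > 0" and fb: "\<And>x. x \<ge> 0 \<Longrightarrow> \<bar>f x\<bar> \<le> M * rho x"
    and fL: "((\<lambda>x. f x / rho x) \<longlongrightarrow> L) at_top"
    using f unfolding C_rho_k_def by blast
  have R1: "\<bar>1::real\<bar> < R" using R by simp
  define A where "A = pser a 1"
  define H where "H = pser h 1"
  define \<alpha> where "\<alpha> = pser (diffs a) 1 / A"
  define H2 where "H2 = pser (diffs (diffs h)) 1"
  define B where "B = 2 * \<alpha> + H2 + 1"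
  define C where "C = pser (diffs (diffs a)) 1 / A + \<alpha>"
  have Hd: "pser (diffs h) 1 = 1"
    using DERIV_imp_deriv[OF ps_deriv(1)[OF h_conv R1]] H'1 by simp
  have mom: "(\<lambda>k. p k y) sums (A * exp (y * H))"
    "(\<lambda>k. real k * p k y) sums ((pser (diffs a) 1 + y * A) * exp (y * H))"
    "(\<lambda>k. real k * (real k - 1) * p k y) sums
          ((pser (diffs (diffs a)) 1 + y * pser (diffs a) 1
            + y * A * H2 + (pser (diffs a) 1 + y * A) * y) * exp (y * H))" for y
    using moments[OF R a_conv h_conv gen, of y] unfolding A_def H_def H2_def Hd by simp_all
  have Apos: "A > 0"
  proof -
    have "0 \<le> suminf (\<lambda>k. p k 0)" using mom(1)[of 0] p_nonneg
      by (intro suminf_nonneg) (auto dest: sums_summable)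
    then have "A \<ge> 0" using sums_unique[OF mom(1)[of 0]] by simp
    then show ?thesis using A1 A_def by auto
  qed
  have key: "\<forall>\<^sub>F n in sequentially. \<forall>x\<ge>0. \<bar>Tstar a h p b n f x - f x\<bar> \<le> \<epsilon> * rho x" if \<epsilon>: "\<epsilon> > 0" for \<epsilon>
  proof -
    define e where "e = \<epsilon> / 4"
    have e: "e > 0" using \<epsilon> e_def by simp
    define g where "g s = f s - L * rho s" for s
    have gc: "continuous_on {0..} g" unfolding g_def[abs_def] rho_def
      by (intro continuous_intros fc)
    have "((\<lambda>s. f s / rho s - L) \<longlongrightarrow> L - L) at_top" by (intro tendsto_intros fL)
    moreover have "(\<lambda>s. f s / rho s - L) = (\<lambda>s. g s / rho s)"
    proof
      fix s show "f s / rho s - L = g s / rho s"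
        using rho_pos[of s] unfolding g_def by (simp add: diff_divide_distrib)
    qed
    ultimately have gl: "((\<lambda>s. g s / rho s) \<longlongrightarrow> 0) at_top" by simp
    from tendstoD[OF gl e] obtain X0 where X0: "\<And>s. s \<ge> X0 \<Longrightarrow> dist (g s / rho s) 0 < e"
      unfolding eventually_at_top_linorder by blast
    define X where "X = max X0 0"
    have X: "X \<ge> 0" unfolding X_def by simp
    have tail: "\<bar>g s\<bar> \<le> e * rho s" if "s \<ge> X" for s
    proof -
      have "\<bar>g s\<bar> / rho s < e" using X0[of s] that rho_pos[of s] unfolding X_def
        by (simp add: dist_real_def)
      then show ?thesis using rho_pos[of s] by (simp add: divide_less_eq)
    qed
    have gc2: "continuous_on {0..X+1} g" using gc by (rule continuous_on_subset) auto
    have "uniformly_continuous_on {0..X+1} g"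
      using compact_uniformly_continuous[OF gc2 compact_Icc] .
    from uniformly_continuous_onE[OF this e] obtain \<eta>0 where \<eta>0: "\<eta>0 > 0"
      and uc0: "\<And>s u. s \<in> {0..X+1} \<Longrightarrow> u \<in> {0..X+1} \<Longrightarrow> dist u s < \<eta>0 \<Longrightarrow> dist (g u) (g s) < e"
      by metis
    define \<eta> where "\<eta> = min \<eta>0 1"
    have eta: "\<eta> > 0" "\<eta> \<le> 1" using \<eta>0 unfolding \<eta>_def by auto
    have uc: "\<bar>g s - g u\<bar> < e" if "s \<in> {0..X+1}" "u \<in> {0..X+1}" "\<bar>s - u\<bar> < \<eta>" for s u
      using uc0[OF that(2,1)] that(3) unfolding \<eta>_def dist_real_def by (simp add: abs_minus_commute)
    have "bounded (g ` {0..X+1})"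
      by (rule compact_imp_bounded[OF compact_continuous_image[OF gc2 compact_Icc]])
    then obtain K where K: "K > 0" and bd0: "\<And>s. s \<in> {0..X+1} \<Longrightarrow> norm (g s) \<le> K"
      unfolding bounded_pos by auto
    have bd: "\<bar>g s\<bar> \<le> K" if "s \<in> {0..X+1}" for s using bd0[OF that] by simp
    define K' where "K' = 2 * K / \<eta>^2"
    have K': "K' \<ge> 0" using K unfolding K'_def by simp
    have P: "\<bar>g s - g u\<bar> \<le> e + e * rho s + e * rho u + K' * (s - u)^2" if "s \<ge> 0" "u \<ge> 0" for s u
      unfolding K'_def by (rule split_bound[OF e eta X _ tail uc bd that]) (use K in auto)
    define err where "err n = e * (b n / real n * (\<bar>B\<bar> + b n / real n * \<bar>C\<bar>))
        + K' * (b n / real n * (\<bar>B\<bar> + 2 * \<bar>\<alpha>\<bar> + b n / real n * \<bar>C\<bar>))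
        + \<bar>L\<bar> * (b n / real n * (\<bar>B\<bar> + b n / real n * \<bar>C\<bar>))" for n
    have "err \<longlonglongrightarrow> e * (0 * (\<bar>B\<bar> + 0 * \<bar>C\<bar>)) + K' * (0 * (\<bar>B\<bar> + 2 * \<bar>\<alpha>\<bar> + 0 * \<bar>C\<bar>))
        + \<bar>L\<bar> * (0 * (\<bar>B\<bar> + 0 * \<bar>C\<bar>))"
      unfolding err_def[abs_def] by (intro tendsto_intros b_o)
    then have "err \<longlonglongrightarrow> 0" by simp
    then have ev1: "\<forall>\<^sub>F n in sequentially. err n < e" using e by (rule order_tendstoD)
    have ev2: "\<forall>\<^sub>F n in sequentially. n > 0" by (rule eventually_gt_at_top)
    show ?thesis
    proof (rule eventually_mono[OF eventually_conj[OF ev1 ev2]], intro allI impI)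
      fix n x assume nx: "err n < e \<and> 0 < n" and x: "(x::real) \<ge> 0"
      have n: "n > 0" using nx by simp
      have bn: "b n > 0" using b_pos by simp
      define \<delta> where "\<delta> = b n / real n"
      define y where "y = real n / b n * x"
      define c where "c = exp (- (real n / b n) * x * pser h 1) / pser a 1"
      define W where "W k = c * p k y" for k
      define T where "T k = real k / real n * b n" for k
      have \<delta>: "\<delta> \<ge> 0" unfolding \<delta>_def using bn by simp
      have y: "y \<ge> 0" unfolding y_def using bn x by simp
      have \<delta>y: "\<delta> * y = x" unfolding \<delta>_def y_def using n bn by simp
      have cE: "c * (A * exp (y * H)) = 1"
        unfolding c_def A_def H_def y_def using Apos A_def
        by (simp add: exp_minus field_simps)
      have cpos: "c \<ge> 0" unfolding c_def using Apos A_def by simp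
      have Wnn: "W k \<ge> 0" for k unfolding W_def using cpos p_nonneg[OF y] by simp
      have Tnn: "T k \<ge> 0" for k unfolding T_def using bn by simp
      have TT: "T k = \<delta> * real k" for k unfolding T_def \<delta>_def by simp
      have m0: "W sums 1" unfolding W_def[abs_def] using sums_mult[OF mom(1)[of y], of c] cE by simp
      have m1: "(\<lambda>k. W k * T k) sums (x + \<delta> * \<alpha>)"
      proof -
        have "(\<lambda>k. (c * \<delta>) * (real k * p k y)) sums ((c * \<delta>) * ((pser (diffs a) 1 + y * A) * exp (y * H)))"
          by (rule sums_mult[OF mom(2)])
        moreover have "(c * \<delta>) * ((pser (diffs a) 1 + y * A) * exp (y * H)) = x + \<delta> * \<alpha>"
        proof -
          have "(c * \<delta>) * ((pser (diffs a) 1 + y * A) * exp (y * H))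
              = (c * (A * exp (y * H))) * (\<delta> * (pser (diffs a) 1 / A) + \<delta> * y)"
            using Apos by (simp add: field_simps)
          then show ?thesis using cE \<delta>y unfolding \<alpha>_def by simp
        qed
        moreover have "(\<lambda>k. W k * T k) = (\<lambda>k. (c * \<delta>) * (real k * p k y))"
          unfolding W_def TT by (auto simp: algebra_simps)
        ultimately show ?thesis by simp
      qed
      have m2: "(\<lambda>k. W k * (T k)^2) sums (x^2 + \<delta> * (B * x + \<delta> * C))"
      proof -
        define Q where "Q = (pser (diffs (diffs a)) 1 + y * pser (diffs a) 1
            + y * A * H2 + (pser (diffs a) 1 + y * A) * y) * exp (y * H) +
            (pser (diffs a) 1 + y * A) * exp (y * H)"
        have "(\<lambda>k. real k * (real k - 1) * p k y + real k * p k y) sums Q"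
          unfolding Q_def by (rule sums_add[OF mom(3) mom(2)])
        then have "(\<lambda>k. (c * \<delta>^2) * (real k * (real k - 1) * p k y + real k * p k y)) sums ((c * \<delta>^2) * Q)"
          by (rule sums_mult)
        moreover have "(c * \<delta>^2) * Q = x^2 + \<delta> * (B * x + \<delta> * C)"
        proof -
          have "(c * \<delta>^2) * Q = (c * (A * exp (y * H))) *
             (\<delta>^2 * (pser (diffs (diffs a)) 1 / A) + \<delta>^2 * y * (pser (diffs a) 1 / A)
              + \<delta>^2 * y * H2 + \<delta>^2 * ((pser (diffs a) 1 / A) + y) * y
              + \<delta>^2 * ((pser (diffs a) 1 / A) + y))"
            unfolding Q_def using Apos by (simp add: field_simps)
          also have "\<dots> = \<delta>^2 * (pser (diffs (diffs a)) 1 / A) + \<delta> * (\<delta> * y) * \<alpha>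
              + \<delta> * (\<delta> * y) * H2 + \<delta>^2 * \<alpha> + \<delta> * (\<delta> * y) * \<alpha> + (\<delta> * y)^2 + \<delta> * (\<delta> * y)"
            unfolding cE \<alpha>_def by (simp add: algebra_simps power2_eq_square)
          also have "\<dots> = x^2 + \<delta> * (B * x + \<delta> * C)"
            unfolding \<delta>y B_def C_def by (simp add: algebra_simps power2_eq_square)
          finally show ?thesis .
        qed
        moreover have "(\<lambda>k. W k * (T k)^2) = (\<lambda>k. (c * \<delta>^2) * (real k * (real k - 1) * p k y + real k * p k y))"
          unfolding W_def TT by (auto simp: algebra_simps power2_eq_square)
        ultimately show ?thesis by simp
      qed
      note PE = pointwise_est[OF x \<delta> e K' M fb g_def P Wnn Tnn m0 m1 m2]
      have "Tstar a h p b n f x = c * suminf (\<lambda>k. p k y * f (T k))"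
        unfolding Tstar_def c_def y_def T_def by simp
      also have "\<dots> = suminf (\<lambda>k. W k * f (T k))"
      proof (cases "c = 0")
        case True then show ?thesis unfolding W_def by simp
      next
        case False
        have "summable (\<lambda>k. c * (p k y * f (T k)))" using PE(1) unfolding W_def by (simp add: mult.assoc)
        then have "summable (\<lambda>k. p k y * f (T k))" using False by (simp add: summable_cmult_iff)
        then show ?thesis unfolding W_def using suminf_mult[of "\<lambda>k. p k y * f (T k)" c]
          by (simp add: mult.assoc)
      qed
      finally have Teq: "Tstar a h p b n f x = suminf (\<lambda>k. W k * f (T k))" .
      have "err n \<le> e" using nx by simp
      then have "(3 * e + err n) * rho x \<le> (3 * e + e) * rho x"
        using rho_pos[of x] by (intro mult_right_mono) auto
      then show "\<bar>Tstar a h p b n f x - f x\<bar> \<le> \<epsilon> * rho x"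
        using PE(2) unfolding Teq err_def \<delta>_def e_def by simp
    qed
  qed
  have nonneg: "0 \<le> rho_norm (\<lambda>x. Tstar a h p b n f x - f x)" for n
    unfolding rho_norm_def by (rule SUP_upper2[of 0]) (auto intro: divide_nonneg_pos rho_pos)
  have upper: "\<forall>\<^sub>F n in sequentially. rho_norm (\<lambda>x. Tstar a h p b n f x - f x) \<le> ereal \<epsilon>"
    if "\<epsilon> > 0" for \<epsilon>
  proof (rule eventually_mono[OF key[OF that]])
    fix n assume H: "\<forall>x\<ge>0. \<bar>Tstar a h p b n f x - f x\<bar> \<le> \<epsilon> * rho x"
    show "rho_norm (\<lambda>x. Tstar a h p b n f x - f x) \<le> ereal \<epsilon>"
      unfolding rho_norm_def
    proof (rule SUP_least)
      fix x :: real assume "x \<in> {0..}"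
      then have "\<bar>Tstar a h p b n f x - f x\<bar> / rho x \<le> \<epsilon>"
        using H rho_pos[of x] by (simp add: divide_le_eq)
      then show "ereal (\<bar>Tstar a h p b n f x - f x\<bar> / rho x) \<le> ereal \<epsilon>" by simp
    qed
  qed
  show ?thesis
  proof (rule order_tendstoI)
    fix r :: ereal assume "r < 0"
    then show "\<forall>\<^sub>F n in sequentially. r < rho_norm (\<lambda>x. Tstar a h p b n f x - f x)"
      using nonneg by (intro always_eventually allI) (rule less_le_trans)
  next
    fix r :: ereal assume r: "0 < r"
    show "\<forall>\<^sub>F n in sequentially. rho_norm (\<lambda>x. Tstar a h p b n f x - f x) < r"
    proof (cases r)
      case (real q)
      then have q: "q > 0" using r by simp
      have "ereal (q/2) < r" using q real by simp
      then show ?thesis using upper[of "q/2"] q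
        by (auto elim!: eventually_mono intro: le_less_trans)
    next
      case PInf
      show ?thesis using upper[of 1] by (auto simp: PInf elim!: eventually_mono intro: le_less_trans)
    next
      case MInf then show ?thesis using r by simp
    qed
  qed
qed

end
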